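(* Let $\mathfrak{d}\geq 2$ be an integer, $c>0$, $\lambda>0$, and let $p_{\mathbf{X}_{\mathfrak{d}}}(\mathbf{x},t)$ denote the density of the absolutely continuous component of the law of the random flight $\mathbf{X}_{\mathfrak{d}}(t)$ described in the context. Define, for $t>0$ and $\mathbf{x}\in\mathbb{R}^{\mathfrak{d}}$ with $\|\mathbf{x}\|<ct$, $$f(\mathbf{x},t)=\pi^{\mathfrak{d}/2}(ct)^{\mathfrak{d}-2}\,E_{\frac{\mathfrak{d}-1}{2},\frac{\mathfrak{d}}{2},\frac{\mathfrak{d}-1}{2},\frac{\mathfrak{d}-1}{2}}\!\left(\left(\tfrac{\lambda t}{2}\right)^{\mathfrak{d}-1}\right)p_{\mathbf{X}_{\mathfrak{d}}}(\mathbf{x},t).$$ Then $$f(\mathbf{x},t)=\sum_{k=1}^{\infty}\left(\frac{\lambda}{2c}\right)^{k(\mathfrak{d}-1)}\frac{(c^2t^2-\|\mathbf{x}\|^2)^{\frac{k}{2}(\mathfrak{d}-1)-1}}{\Gamma\!\left(\frac{k}{2}(\mathfrak{d}-1)\right)\Gamma\!\left(\frac{\mathfrak{d}-1}{2}(k+1)\right)},$$ and $u=f$ solves the higher order Klein–Gordon equation $$\left(\frac{\partial^2}{\partial t^2}-c^2\Delta\right)^{\mathfrak{d}-1}u(\mathbf{x},t)=\lambda^{2(\mathfrak{d}-1)}u(\mathbf{x},t),\qquad \Delta=\sum_{j=1}^{\mathfrak{d}}\frac{\partial^2}{\partial x_j^2},$$ in the region $\{(\mathbf{x},t):t>0,\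 \|\mathbf{x}\|<ct\}$.
   Context: Random flight $\mathbf{X}_{\mathfrak{d}}(t)$ in $\mathbb{R}^{\mathfrak{d}}$: a particle starts at the origin at time $0$ and moves with constant speed $c>0$; it changes direction $\mathfrak{N}_{\mathfrak{d}}(t)$ times in $(0,t)$; the successive directions are independent and uniformly distributed on the unit sphere $S^{\mathfrak{d}-1}$. Given $\mathfrak{N}_{\mathfrak{d}}(t)=k$, the durations $\tau_1,\dots,\tau_{k+1}$ of the $k+1$ straight segments ($\tau_{k+1}=t-\sum_{j=1}^k\tau_j$) have joint density $\frac{\Gamma((k+1)(\mathfrak{d}-1))}{[\Gamma(\mathfrak{d}-1)]^{k+1}}\frac{1}{t^{(k+1)(\mathfrak{d}-1)-1}}\prod_{j=1}^{k+1}\tau_j^{\mathfrak{d}-2}$ (a Dirichlet law with parameters $(\mathfrak{d}-1,\dots,\mathfrak{d}-1)$ rescaled to total $t$), independent of the directions. The number of changes has law $P\{\mathfrak{N}_{\mathfrak{d}}(t)=k\}=\frac{1}{E_{\mathfrak{d}-1,\mathfrak{d}-1}((\lambda t)^{\mathfrak{d}-1})}\frac{(\lambda t)^{k(\mathfrak{d}-1)}}{\Gamma((k+1)(\mathfrak{d}-1))}$, $k=0,1,2,\dots$, where $E_{\alpha,\beta}(x)=\sum_{k\ge0}x^k/\Gamma(\alpha k+\beta)$. It is known that, for $k\geq1$, the conditional law of $\mathbf{X}_{\mathfrak{d}}(t)$ given $\mathfrak{N}_{\mathfrak{d}}(t)=k$ has density $p(\mathbf{x},t;k)=\frac{\Gamma(\frac{k+1}{2}(\mathfrak{d}-1)+\frac12)}{\Gamma(\frac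 k2(\mathfrak{d}-1))}\frac{(c^2t^2-\|\mathbf{x}\|^2)^{\frac k2(\mathfrak{d}-1)-1}}{\pi^{\mathfrak{d}/2}(ct)^{(k+1)(\mathfrak{d}-1)-1}}$ on $\|\mathbf{x}\|<ct$. The absolutely continuous component of the law of $\mathbf{X}_{\mathfrak{d}}(t)$ has density $p_{\mathbf{X}_{\mathfrak{d}}}(\mathbf{x},t)=\sum_{k\ge1}p(\mathbf{x},t;k)P\{\mathfrak{N}_{\mathfrak{d}}(t)=k\}$. The multi-index Mittag-Leffler function used is $E_{\frac{\mathfrak{d}-1}{2},\frac{\mathfrak{d}}{2},\frac{\mathfrak{d}-1}{2},\frac{\mathfrak{d}-1}{2}}(z)=\sum_{k=0}^\infty\frac{z^k}{\Gamma(\frac{k+1}{2}(\mathfrak{d}-1)+\frac12)\Gamma(\frac{\mathfrak{d}-1}{2}(k+1))}$. *)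

theory Defs
  imports "HOL-Analysis.Analysis"
begin

definition ML2 :: "real \<Rightarrow> real \<Rightarrow> real \<Rightarrow> real" where
  "ML2 \<alpha> \<beta> x = (\<Sum>k. x ^ k / Gamma (\<alpha> * real k + \<beta>))"

text \<open>Multi-index Mittag-Leffler function
  E_{(d-1)/2, d/2, (d-1)/2, (d-1)/2}(z) used in the paper.\<close>
definition MLd :: "nat \<Rightarrow> real \<Rightarrow> real" where
  "MLd d z = (\<Sum>k. z ^ k /
      (Gamma ((real k + 1) / 2 * (real d - 1) + 1/2) * Gamma ((real d - 1) / 2 * (real k + 1))))"

text \<open>Law of the number of direction changes N_d(t).\<close>
definition probN :: "nat \<Rightarrow> real \<Rightarrow> real \<Rightarrow> nat \<Rightarrow> real" where
  "probN d lam t k = (lam * t) ^ (k * (d - 1)) / Gamma (real ((k + 1) * (d - 1)))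
                      / ML2 (real d - 1) (real d - 1) ((lam * t) ^ (d - 1))"

text \<open>Conditional density p(x,t;k) of X_d(t) given N_d(t)=k (k \<ge> 1), on ||x|| < ct.\<close>
definition pcond :: "nat \<Rightarrow> real \<Rightarrow> real ^ 'n \<Rightarrow> real \<Rightarrow> nat \<Rightarrow> real" where
  "pcond d c x t k =
     Gamma ((real k + 1) / 2 * (real d - 1) + 1/2) / Gamma (real k / 2 * (real d - 1))
     * (c\<^sup>2 * t\<^sup>2 - (norm x)\<^sup>2) powr (real k / 2 * (real d - 1) - 1)
     / (pi powr (real d / 2) * (c * t) ^ ((k + 1) * (d - 1) - 1))"

definition pX :: "nat \<Rightarrow> real \<Rightarrow> real \<Rightarrow> real ^ 'n \<Rightarrow> real \<Rightarrow> real" where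
  "pX d c lam x t = (\<Sum>k. pcond d c x t (Suc k) * probN d lam t (Suc k))"

text \<open>Partial derivatives of u(x,t): direction None = time, Some j = x_j.\<close>
definition pd :: "'n option \<Rightarrow> (real ^ 'n \<Rightarrow> real \<Rightarrow> real) \<Rightarrow> real ^ 'n \<Rightarrow> real \<Rightarrow> real" where
  "pd dir u x t = (case dir of
       None \<Rightarrow> deriv (\<lambda>s. u x s) t
     | Some j \<Rightarrow> deriv (\<lambda>s. u (x + s *\<^sub>R axis j 1) t) 0)"

definition pdiff :: "'n option \<Rightarrow> (real ^ 'n \<Rightarrow> real \<Rightarrow> real) \<Rightarrow> real ^ 'n \<Rightarrow> real \<Rightarrow> bool" where
  "pdiff dir u x t = (case dir of
       None \<Rightarrow> (\<lambda>s. u x s) differentiable (at t)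
     | Some j \<Rightarrow> (\<lambda>s. u (x + s *\<^sub>R axis j 1) t) differentiable (at 0))"

definition KG :: "real \<Rightarrow> (real ^ 'n \<Rightarrow> real \<Rightarrow> real) \<Rightarrow> real ^ 'n \<Rightarrow> real \<Rightarrow> real" where
  "KG c u x t = pd None (pd None u) x t - c\<^sup>2 * (\<Sum>j\<in>UNIV. pd (Some j) (pd (Some j) u) x t)"

end

theory Submission
  imports Defs
begin


lemma Gamma_dup_real:
  fixes x :: real assumes "x > 0"
  shows "Gamma x * Gamma (x + 1/2) = 2 powr (1 - 2*x) * sqrt pi * Gamma (2*x)"
proof -
  have n1: "complex_of_real x \<notin> \<int>\<^sub>\<le>\<^sub>0" using assms
    by (auto simp: of_real_in_nonpos_Ints_iff elim!: nonpos_Ints_cases)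
  have r2: "x + 1/2 \<notin> \<int>\<^sub>\<le>\<^sub>0" using assms nonpos_Ints_nonpos by fastforce
  have e2: "complex_of_real x + 1/2 = complex_of_real (x + 1/2)" by simp
  have n2: "complex_of_real x + 1/2 \<notin> \<int>\<^sub>\<le>\<^sub>0"
    unfolding e2 by (simp only: of_real_in_nonpos_Ints_iff r2 not_False_eq_True)
  have H: "Gamma (complex_of_real x) * Gamma (complex_of_real x + 1/2) =
             exp ((1 - 2*complex_of_real x) * of_real (ln 2)) * of_real (sqrt pi) * Gamma (2*complex_of_real x)"
    by (rule Gamma_legendre_duplication[OF n1 n2])
  have L: "Gamma (complex_of_real x) * Gamma (complex_of_real x + 1/2) = complex_of_real (Gamma x * Gamma (x + 1/2))"
    unfolding e2 Gamma_complex_of_real by simp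
  have R1: "exp ((1 - 2*complex_of_real x) * of_real (ln 2)) = complex_of_real (2 powr (1 - 2*x))"
  proof -
    have "(1 - 2*complex_of_real x) * of_real (ln 2) = complex_of_real ((1 - 2*x) * ln 2)" by simp
    hence "exp ((1 - 2*complex_of_real x) * of_real (ln 2)) = complex_of_real (exp ((1 - 2*x) * ln 2))"
      by (simp only: exp_of_real)
    thus ?thesis by (simp add: powr_def mult.commute)
  qed
  have R2: "Gamma (2*complex_of_real x) = complex_of_real (Gamma (2*x))"
  proof -
    have "2*complex_of_real x = complex_of_real (2*x)" by simp
    thus ?thesis by (simp only: Gamma_complex_of_real)
  qed
  have "complex_of_real (Gamma x * Gamma (x + 1/2)) = complex_of_real (2 powr (1 - 2*x) * sqrt pi * Gamma (2*x))"
    using H unfolding L R1 R2 by simp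
  thus ?thesis using of_real_eq_iff by blast
qed

lemma poch_ge1: "(a::real) \<ge> 1 \<Longrightarrow> pochhammer a n \<ge> 1"
proof (induction n)
  case 0 then show ?case by simp
next
  case (Suc n)
  have "pochhammer a (Suc n) = pochhammer a n * (a + real n)" by (simp add: pochhammer_Suc)
  also have "\<dots> \<ge> 1 * 1" using Suc by (intro mult_mono) auto
  finally show ?case by simp
qed

lemma poch_ge: "(a::real) \<ge> 1 \<Longrightarrow> n \<ge> 1 \<Longrightarrow> pochhammer a n \<ge> a"
proof -
  assume a: "a \<ge> 1" and n: "n \<ge> 1"
  then obtain k where k: "n = Suc k" by (cases n) auto
  have "pochhammer a n = a * pochhammer (a+1) k" unfolding k by (simp add: pochhammer_rec)
  also have "\<dots> \<ge> a * 1" using poch_ge1[of "a+1" k] a by (intro mult_left_mono) auto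
  finally show ?thesis by simp
qed

lemma Gamma_shift_poch: "(a::real) > 0 \<Longrightarrow> Gamma (a + real n) = pochhammer a n * Gamma a"
proof -
  assume a: "a > 0"
  have "a \<notin> \<int>\<^sub>\<le>\<^sub>0" using a nonpos_Ints_nonpos by fastforce
  hence "pochhammer a n = Gamma (a + of_nat n) / Gamma a" by (rule pochhammer_Gamma)
  moreover have "Gamma a > 0" using a by simp
  ultimately show ?thesis by simp
qed

lemma ratio_summable:
  fixes Z :: real and g :: "nat \<Rightarrow> real" and G :: "nat \<Rightarrow> real" and N :: nat
  assumes N: "N \<ge> 1"
    and gpos: "\<And>k. g k \<ge> real k / 2"
    and g1: "\<And>k. g k > 0"
    and Gpos: "\<And>k. G k > 0"
    and rec: "\<And>k. G (Suc k) = pochhammer (g k) N * G k"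
  shows "summable (\<lambda>k. Z ^ k / G k)"
proof (rule summable_ratio_test[where c = "1/2" and N = "nat \<lceil>4 * \<bar>Z\<bar>\<rceil> + 2"])
  fix k assume k: "k \<ge> nat \<lceil>4 * \<bar>Z\<bar>\<rceil> + 2"
  have gk: "g k \<ge> 2 * \<bar>Z\<bar>" "g k \<ge> 1"
    using gpos[of k] k by (linarith, linarith)
  have P: "pochhammer (g k) N \<ge> g k" using poch_ge[OF gk(2) N] .
  have Pp: "pochhammer (g k) N > 0" using P g1[of k] by linarith
  have "norm (Z ^ Suc k / G (Suc k)) = \<bar>Z\<bar> / pochhammer (g k) N * (\<bar>Z\<bar> ^ k / G k)"
    using Gpos[of k] Gpos[of "Suc k"] Pp unfolding rec by (simp add: abs_mult power_abs field_simps)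
  also have "\<dots> \<le> 1/2 * (\<bar>Z\<bar> ^ k / G k)"
  proof (rule mult_right_mono)
    show "\<bar>Z\<bar> / pochhammer (g k) N \<le> 1/2" using P gk Pp by (simp add: divide_simps)
    show "0 \<le> \<bar>Z\<bar> ^ k / G k" using Gpos[of k] by simp
  qed
  also have "\<bar>Z\<bar> ^ k / G k = norm (Z ^ k / G k)" using Gpos[of k] by (simp add: power_abs)
  finally show "norm (Z ^ Suc k / G (Suc k)) \<le> 1/2 * norm (Z ^ k / G k)" .
qed simp




definition PS :: "(nat \<Rightarrow> real) \<Rightarrow> real \<Rightarrow> real" where
  "PS b y = (\<Sum>n. b n * y ^ n)"
definition allconv :: "(nat \<Rightarrow> real) \<Rightarrow> bool" where
  "allconv b \<longleftrightarrow> (\<forall>y. summable (\<lambda>n. b n * y ^ n))"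
definition dco :: "nat \<Rightarrow> (nat \<Rightarrow> real) \<Rightarrow> nat \<Rightarrow> real" where
  "dco J b n = (real n - real J) * b n"

lemma PS_sums: "allconv b \<Longrightarrow> (\<lambda>n. b n * y ^ n) sums PS b y"
  unfolding allconv_def PS_def by (simp add: summable_sums)

lemma nbsums:
  assumes "allconv b"
  shows "(\<lambda>n. real n * b n * y ^ n) sums (y * (\<Sum>n. diffs b n * y^n))"
proof -
  have s: "summable (\<lambda>n. diffs b n * y^n)"
    using assms unfolding allconv_def by (intro termdiff_converges_all) auto
  have "(\<lambda>n. y * (diffs b n * y^n)) sums (y * (\<Sum>n. diffs b n * y^n))"
    using s by (intro sums_mult summable_sums)
  moreover have "(\<lambda>n. y * (diffs b n * y^n)) = (\<lambda>n. real (Suc n) * b (Suc n) * y ^ Suc n)"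
    by (rule ext) (simp add: diffs_def algebra_simps)
  ultimately have "(\<lambda>n. real (Suc n) * b (Suc n) * y ^ Suc n) sums (y * (\<Sum>n. diffs b n * y^n))"
    by simp
  hence "(\<lambda>n. real n * b n * y ^ n) sums (y * (\<Sum>n. diffs b n * y^n) + real 0 * b 0 * y ^ 0)"
    by (rule sums_Suc_iff[of "\<lambda>n. real n * b n * y ^ n", THEN iffD1])
  moreover have "real 0 * b 0 * y ^ 0 = 0" by simp
  ultimately show ?thesis by (simp only: add_0_right)
qed

lemma dco_sums:
  assumes "allconv b"
  shows "(\<lambda>n. dco J b n * y ^ n) sums (y * (\<Sum>n. diffs b n * y^n) - real J * PS b y)"
proof -
  have "(\<lambda>n. real n * b n * y ^ n - real J * (b n * y ^ n)) sums (y * (\<Sum>n. diffs b n * y^n) - real J * PS b y)"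
    by (intro sums_diff sums_mult nbsums PS_sums assms)
  moreover have "(\<lambda>n. real n * b n * y ^ n - real J * (b n * y ^ n)) = (\<lambda>n. dco J b n * y ^ n)"
    by (rule ext) (simp add: dco_def algebra_simps)
  ultimately show ?thesis by simp
qed

lemma allconv_dco: "allconv b \<Longrightarrow> allconv (dco J b)"
proof -
  assume b: "allconv b"
  show "allconv (dco J b)" unfolding allconv_def[of "dco J b"]
  proof
    fix y show "summable (\<lambda>n. dco J b n * y ^ n)" by (rule sums_summable[OF dco_sums[OF b]])
  qed
qed

lemma PS_dco: "allconv b \<Longrightarrow> PS (dco J b) y = y * (\<Sum>n. diffs b n * y^n) - real J * PS b y"
  unfolding PS_def[of "dco J b"] by (rule sums_unique[OF dco_sums, symmetric])

lemma PS_deriv: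
  assumes b: "allconv b" and y: "y > 0"
  shows "((\<lambda>y. PS b y / y ^ J) has_real_derivative PS (dco J b) y / y ^ Suc J) (at y)"
proof -
  have H: "(PS b has_real_derivative (\<Sum>n. diffs b n * y^n)) (at y)"
    unfolding PS_def using b unfolding allconv_def by (intro termdiffs_strong_converges_everywhere) auto
  have P: "((\<lambda>y. y ^ J) has_real_derivative real J * y ^ (J - Suc 0)) (at y)"
    by (rule DERIV_pow)
  have D: "((\<lambda>y. PS b y / y ^ J) has_real_derivative
      ((\<Sum>n. diffs b n * y^n) * y ^ J - PS b y * (real J * y ^ (J - Suc 0))) / (y ^ J * y ^ J)) (at y)"
    using DERIV_divide[OF H P] y by simp
  have E: "(S * y ^ J - P * (real J * y ^ (J - Suc 0))) / (y ^ J * y ^ J) = (y * S - real J * P) / y ^ Suc J"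
    for S P :: real
  proof (cases J)
    case 0 then show ?thesis using y by simp
  next
    case (Suc K)
    have yk: "y ^ K > 0" using y by simp
    have e1: "(S * y ^ J - P * (real J * y ^ (J - Suc 0))) = y ^ K * (y * S - real J * P)"
      unfolding Suc by (simp add: algebra_simps)
    have e2: "y ^ J * y ^ J = y ^ K * y ^ Suc J" unfolding Suc by (simp add: algebra_simps)
    have "y ^ K * (y * S - real J * P) / (y ^ K * y ^ Suc J) = (y * S - real J * P) / y ^ Suc J"
      by (rule nonzero_mult_divide_mult_cancel_left) (use yk in linarith)
    thus ?thesis by (simp only: e1 e2)
  qed
  show ?thesis using D unfolding E PS_dco[OF b] .
qed




definition Yf :: "real \<Rightarrow> real ^ 'n \<Rightarrow> real \<Rightarrow> real" where
  "Yf c x t = sqrt (c\<^sup>2 * t\<^sup>2 - (norm x)\<^sup>2)"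
definition Phi :: "real \<Rightarrow> (nat \<Rightarrow> real) \<Rightarrow> nat \<Rightarrow> real ^ 'n \<Rightarrow> real \<Rightarrow> real" where
  "Phi c b J x t = PS b (Yf c x t) / (Yf c x t) ^ J"
definition reg :: "real \<Rightarrow> real ^ 'n \<Rightarrow> real \<Rightarrow> bool" where
  "reg c x t \<longleftrightarrow> t > 0 \<and> norm x < c * t"

lemma reg_Q: assumes "c > 0" "reg c x t" shows "c\<^sup>2 * t\<^sup>2 - (norm x)\<^sup>2 > 0"
proof -
  have "0 \<le> norm x" "norm x < c * t" using assms by (auto simp: reg_def)
  hence "(norm x)\<^sup>2 < (c * t)\<^sup>2" by (intro power_strict_mono) auto
  thus ?thesis by (simp add: power_mult_distrib)
qed

lemma reg_Y: assumes "c > 0" "reg c x t" shows "Yf c x t > 0"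
  using reg_Q[OF assms] by (simp add: Yf_def)

lemma Y_sq: assumes "c > 0" "reg c x t" shows "(Yf c x t)\<^sup>2 = c\<^sup>2 * t\<^sup>2 - (norm x)\<^sup>2"
  using reg_Q[OF assms] by (simp add: Yf_def)

lemma norm_axis_sq:
  fixes x :: "real ^ 'n"
  shows "(norm (x + s *\<^sub>R axis j 1))\<^sup>2 = (norm x)\<^sup>2 + 2 * s * (x $ j) + s\<^sup>2"
proof -
  have "(norm (x + s *\<^sub>R axis j 1))\<^sup>2 = (x + s *\<^sub>R axis j 1) \<bullet> (x + s *\<^sub>R axis j 1)"
    by (simp add: power2_norm_eq_inner)
  also have "\<dots> = x \<bullet> x + 2 * s * (x \<bullet> axis j 1) + s * s * (axis j 1 \<bullet> axis j (1::real))"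
    by (simp add: inner_add_left inner_add_right inner_commute algebra_simps)
  also have "x \<bullet> axis j 1 = x $ j" by (simp add: inner_axis)
  also have "axis j 1 \<bullet> axis j (1::real) = 1" by (simp add: inner_axis_axis)
  finally have "(norm (x + s *\<^sub>R axis j 1))\<^sup>2 = x \<bullet> x + 2 * s * x $ j + s * s * 1" .
  thus ?thesis by (simp only: dot_square_norm power2_eq_square)
qed

lemma DY_None:
  assumes c: "c > 0" and r: "reg c x t"
  shows "((\<lambda>s. Yf c x s) has_real_derivative c\<^sup>2 * t / Yf c x t) (at t)"
proof -
  have Q: "((\<lambda>s. c\<^sup>2 * s\<^sup>2 - (norm x)\<^sup>2) has_real_derivative c\<^sup>2 * (2 * t)) (at t)"
    by (auto intro!: derivative_eq_intros)
  have S: "(sqrt has_real_derivative inverse (sqrt (c\<^sup>2 * t\<^sup>2 - (norm x)\<^sup>2)) / 2) (at (c\<^sup>2 * t\<^sup>2 - (norm x)\<^sup>2))"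
    by (rule DERIV_real_sqrt[OF reg_Q[OF c r]])
  have "((\<lambda>s. sqrt (c\<^sup>2 * s\<^sup>2 - (norm x)\<^sup>2)) has_real_derivative
          inverse (sqrt (c\<^sup>2 * t\<^sup>2 - (norm x)\<^sup>2)) / 2 * (c\<^sup>2 * (2 * t))) (at t)"
    by (rule DERIV_chain2[OF S Q])
  thus ?thesis unfolding Yf_def by (simp add: field_simps)
qed

lemma DY_Some:
  assumes c: "c > 0" and r: "reg c x t"
  shows "((\<lambda>s. Yf c (x + s *\<^sub>R axis j 1) t) has_real_derivative - (x $ j) / Yf c x t) (at 0)"
proof -
  have eq: "\<And>s. Yf c (x + s *\<^sub>R axis j 1) t = sqrt (c\<^sup>2 * t\<^sup>2 - ((norm x)\<^sup>2 + 2 * s * (x $ j) + s\<^sup>2))"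
    by (simp only: Yf_def norm_axis_sq)
  have Q: "((\<lambda>s. c\<^sup>2 * t\<^sup>2 - ((norm x)\<^sup>2 + 2 * s * (x $ j) + s\<^sup>2)) has_real_derivative - (2 * (x $ j))) (at 0)"
    by (auto intro!: derivative_eq_intros)
  have S: "(sqrt has_real_derivative inverse (sqrt (c\<^sup>2 * t\<^sup>2 - (norm x)\<^sup>2)) / 2) (at (c\<^sup>2 * t\<^sup>2 - ((norm x)\<^sup>2 + 2 * 0 * (x $ j) + 0\<^sup>2)))"
    using DERIV_real_sqrt[OF reg_Q[OF c r]] by simp
  have D: "((\<lambda>s. sqrt (c\<^sup>2 * t\<^sup>2 - ((norm x)\<^sup>2 + 2 * s * (x $ j) + s\<^sup>2))) has_real_derivative
          inverse (sqrt (c\<^sup>2 * t\<^sup>2 - (norm x)\<^sup>2)) / 2 * (- (2 * (x $ j)))) (at 0)"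
    by (rule DERIV_chain2[OF S Q])
  have v: "inverse (sqrt (c\<^sup>2 * t\<^sup>2 - (norm x)\<^sup>2)) / 2 * (- (2 * (x $ j))) = - (x $ j) / Yf c x t"
    by (simp add: Yf_def field_simps)
  show ?thesis using D unfolding v by (simp only: eq)
qed

lemma DPhi_None:
  assumes c: "c > 0" and r: "reg c x t" and b: "allconv b"
  shows "((\<lambda>s. Phi c b J x s) has_real_derivative c\<^sup>2 * t * Phi c (dco J b) (J+2) x t) (at t)"
proof -
  have Y: "Yf c x t > 0" by (rule reg_Y[OF c r])
  have "((\<lambda>s. PS b (Yf c x s) / (Yf c x s) ^ J) has_real_derivative
      PS (dco J b) (Yf c x t) / (Yf c x t) ^ Suc J * (c\<^sup>2 * t / Yf c x t)) (at t)"
    by (rule DERIV_chain2[OF PS_deriv[OF b Y] DY_None[OF c r]])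
  moreover have "PS (dco J b) (Yf c x t) / (Yf c x t) ^ Suc J * (c\<^sup>2 * t / Yf c x t)
       = c\<^sup>2 * t * Phi c (dco J b) (J+2) x t"
    using Y by (simp add: Phi_def field_simps)
  ultimately show ?thesis unfolding Phi_def by simp
qed

lemma DPhi_Some:
  assumes c: "c > 0" and r: "reg c x t" and b: "allconv b"
  shows "((\<lambda>s. Phi c b J (x + s *\<^sub>R axis j 1) t) has_real_derivative - (x $ j) * Phi c (dco J b) (J+2) x t) (at 0)"
proof -
  have Y: "Yf c x t > 0" by (rule reg_Y[OF c r])
  have Y0: "Yf c (x + 0 *\<^sub>R axis j 1) t = Yf c x t" by simp
  have Y': "Yf c (x + 0 *\<^sub>R axis j 1) t > 0" using Y by simp
  have "((\<lambda>s. PS b (Yf c (x + s *\<^sub>R axis j 1) t) / (Yf c (x + s *\<^sub>R axis j 1) t) ^ J) has_real_derivative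
      PS (dco J b) (Yf c x t) / (Yf c x t) ^ Suc J * (- (x $ j) / Yf c x t)) (at 0)"
    using DERIV_chain2[OF PS_deriv[OF b Y'] DY_Some[OF c r, of j]] unfolding Y0 .
  moreover have "PS (dco J b) (Yf c x t) / (Yf c x t) ^ Suc J * (- (x $ j) / Yf c x t)
       = - (x $ j) * Phi c (dco J b) (J+2) x t"
    using Y by (simp add: Phi_def field_simps)
  ultimately show ?thesis unfolding Phi_def by simp
qed




lemma ev_reg_None:
  assumes c: "c > 0" and r: "reg c x t"
  shows "eventually (\<lambda>s. reg c x s) (nhds t)"
proof -
  have o: "open {s. 0 < s \<and> norm x < c * s}"
  proof -
    have "open {s::real. 0 < s}" by (rule open_Collect_less) (auto intro!: continuous_intros)
    moreover have "open {s::real. norm x < c * s}" by (rule open_Collect_less) (auto intro!: continuous_intros)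
    ultimately show ?thesis by (simp add: Collect_conj_eq open_Int)
  qed
  have "t \<in> {s. 0 < s \<and> norm x < c * s}" using r by (simp add: reg_def)
  from eventually_nhds_in_open[OF o this] show ?thesis
    by (rule eventually_mono) (simp add: reg_def)
qed

lemma ev_reg_Some:
  fixes x :: "real ^ 'n"
  assumes c: "c > 0" and r: "reg c x t"
  shows "eventually (\<lambda>s. reg c (x + s *\<^sub>R axis j 1) t) (nhds 0)"
proof -
  have o: "open {s::real. norm (x + s *\<^sub>R axis j 1) < c * t}"
    by (rule open_Collect_less) (auto intro!: continuous_intros)
  have "0 \<in> {s::real. norm (x + s *\<^sub>R axis j 1) < c * t}" using r by (simp add: reg_def)
  from eventually_nhds_in_open[OF o this] show ?thesis
    by (rule eventually_mono) (use r in \<open>simp add: reg_def\<close>)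
qed

definition agree :: "real \<Rightarrow> (real ^ 'n \<Rightarrow> real \<Rightarrow> real) \<Rightarrow> (real ^ 'n \<Rightarrow> real \<Rightarrow> real) \<Rightarrow> bool" where
  "agree c u v \<longleftrightarrow> (\<forall>x t. reg c x t \<longrightarrow> u x t = v x t)"

lemma pd_loc:
  assumes c: "c > 0" and a: "agree c u v" and r: "reg c x t"
  shows "pd dir u x t = pd dir v x t \<and> (pdiff dir u x t \<longleftrightarrow> pdiff dir v x t)"
proof (cases dir)
  case None
  have ev: "eventually (\<lambda>s. u x s = v x s) (nhds t)"
    using ev_reg_None[OF c r] by (rule eventually_mono) (use a in \<open>simp add: agree_def\<close>)
  have ev2: "eventually (\<lambda>s. s \<in> UNIV \<longrightarrow> u x s = v x s) (nhds t)"
    using ev by (rule eventually_mono) simp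
  have "pd dir u x t = pd dir v x t" unfolding None pd_def by (simp add: deriv_cong_ev[OF ev])
  moreover have "pdiff dir u x t \<longleftrightarrow> pdiff dir v x t"
    unfolding None pdiff_def real_differentiable_def
    using has_field_derivative_cong_ev[OF refl ev2 refl refl] by simp
  ultimately show ?thesis by simp
next
  case (Some j)
  have ev: "eventually (\<lambda>s. u (x + s *\<^sub>R axis j 1) t = v (x + s *\<^sub>R axis j 1) t) (nhds 0)"
    using ev_reg_Some[OF c r, of j] by (rule eventually_mono) (use a in \<open>simp add: agree_def\<close>)
  have ev2: "eventually (\<lambda>s. s \<in> UNIV \<longrightarrow> u (x + s *\<^sub>R axis j 1) t = v (x + s *\<^sub>R axis j 1) t) (nhds 0)"
    using ev by (rule eventually_mono) simp
  have "pd dir u x t = pd dir v x t" unfolding Some pd_def by (simp add: deriv_cong_ev[OF ev])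
  moreover have "pdiff dir u x t \<longleftrightarrow> pdiff dir v x t"
    unfolding Some pdiff_def real_differentiable_def
    using has_field_derivative_cong_ev[OF refl ev2 refl refl] by simp
  ultimately show ?thesis by simp
qed

lemma agree_pd:
  assumes c: "c > 0" and a: "agree c u v"
  shows "agree c (pd dir u) (pd dir v)"
  unfolding agree_def using pd_loc[OF c a] by blast

inductive_set Scl :: "real \<Rightarrow> (real ^ 'n \<Rightarrow> real \<Rightarrow> real) set" for c where
  base: "allconv b \<Longrightarrow> Phi c b J \<in> Scl c"
| add: "u \<in> Scl c \<Longrightarrow> v \<in> Scl c \<Longrightarrow> (\<lambda>x t. u x t + v x t) \<in> Scl c"
| smul: "u \<in> Scl c \<Longrightarrow> (\<lambda>x t. a * u x t) \<in> Scl c"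
| tmul: "u \<in> Scl c \<Longrightarrow> (\<lambda>x t. t * u x t) \<in> Scl c"
| xmul: "u \<in> Scl c \<Longrightarrow> (\<lambda>x t. x $ i * u x t) \<in> Scl c"

definition HD :: "'n option \<Rightarrow> (real ^ 'n \<Rightarrow> real \<Rightarrow> real) \<Rightarrow> (real ^ 'n \<Rightarrow> real \<Rightarrow> real) \<Rightarrow> real ^ 'n \<Rightarrow> real \<Rightarrow> bool" where
  "HD dir u v x t = (case dir of None \<Rightarrow> ((\<lambda>s. u x s) has_real_derivative v x t) (at t)
      | Some j \<Rightarrow> ((\<lambda>s. u (x + s *\<^sub>R axis j 1) t) has_real_derivative v x t) (at 0))"

lemma Scl_deriv:
  fixes u :: "real ^ 'n \<Rightarrow> real \<Rightarrow> real"
  assumes c: "c > 0" and u: "u \<in> Scl c"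
  shows "\<exists>v \<in> Scl c. \<forall>x t. reg c x t \<longrightarrow> HD dir u v x t"
  using u
proof induction
  case (base b J)
  show ?case
  proof (cases dir)
    case None
    have "(\<lambda>x t. c\<^sup>2 * (t * Phi c (dco J b) (J+2) x t)) \<in> Scl c"
      by (intro Scl.intros allconv_dco base)
    moreover have "\<forall>x t. reg c x t \<longrightarrow> HD dir (Phi c b J) (\<lambda>x t. c\<^sup>2 * (t * Phi c (dco J b) (J+2) x t)) x t"
      using DPhi_None[OF c _ base] unfolding HD_def None by (auto simp add: mult.assoc)
    ultimately show ?thesis by blast
  next
    case (Some j)
    have "(\<lambda>x t. (-1) * (x $ j * Phi c (dco J b) (J+2) x t)) \<in> Scl c"
      by (intro Scl.intros allconv_dco base)
    moreover have "\<forall>x t. reg c x t \<longrightarrow> HD dir (Phi c b J) (\<lambda>x t. (-1) * (x $ j * Phi c (dco J b) (J+2) x t)) x t"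
      using DPhi_Some[OF c _ base] unfolding HD_def Some by auto
    ultimately show ?thesis by blast
  qed
next
  case (add u v)
  obtain du where du: "du \<in> Scl c" "\<forall>x t. reg c x t \<longrightarrow> HD dir u du x t" using add by blast
  obtain dv where dv: "dv \<in> Scl c" "\<forall>x t. reg c x t \<longrightarrow> HD dir v dv x t" using add by blast
  have "(\<lambda>x t. du x t + dv x t) \<in> Scl c" by (intro Scl.intros du dv)
  moreover have "\<forall>x t. reg c x t \<longrightarrow> HD dir (\<lambda>x t. u x t + v x t) (\<lambda>x t. du x t + dv x t) x t"
    using du(2) dv(2) unfolding HD_def by (cases dir) (auto intro!: DERIV_add)
  ultimately show ?case by blast
next
  case (smul u a)
  obtain du where du: "du \<in> Scl c" "\<forall>x t. reg c x t \<longrightarrow> HD dir u du x t" using smul by blast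
  have "(\<lambda>x t. a * du x t) \<in> Scl c" by (intro Scl.intros du)
  moreover have "\<forall>x t. reg c x t \<longrightarrow> HD dir (\<lambda>x t. a * u x t) (\<lambda>x t. a * du x t) x t"
    using du(2) unfolding HD_def by (cases dir) (auto intro!: DERIV_cmult)
  ultimately show ?case by blast
next
  case (tmul u)
  obtain du where du: "du \<in> Scl c" "\<forall>x t. reg c x t \<longrightarrow> HD dir u du x t" using tmul by blast
  show ?case
  proof (cases dir)
    case None
    have "(\<lambda>x t. u x t + t * du x t) \<in> Scl c" by (intro Scl.intros du tmul)
    moreover have "\<forall>x t. reg c x t \<longrightarrow> HD dir (\<lambda>x t. t * u x t) (\<lambda>x t. u x t + t * du x t) x t"
    proof (intro allI impI)
      fix x :: "real ^ 'n" and t assume "reg c x t"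
      hence d: "((\<lambda>s. u x s) has_real_derivative du x t) (at t)" using du(2) unfolding HD_def None by simp
      have "((\<lambda>s. s * u x s) has_real_derivative 1 * u x t + du x t * t) (at t)"
        by (rule DERIV_mult[OF DERIV_ident d])
      thus "HD dir (\<lambda>x t. t * u x t) (\<lambda>x t. u x t + t * du x t) x t" unfolding HD_def None
        by (simp add: mult.commute)
    qed
    ultimately show ?thesis by blast
  next
    case (Some j)
    have "(\<lambda>x t. t * du x t) \<in> Scl c" by (intro Scl.intros du)
    moreover have "\<forall>x t. reg c x t \<longrightarrow> HD dir (\<lambda>x t. t * u x t) (\<lambda>x t. t * du x t) x t"
      using du(2) unfolding HD_def Some by (auto intro!: DERIV_cmult)
    ultimately show ?thesis by blast
  qed
next
  case (xmul u i)
  obtain du where du: "du \<in> Scl c" "\<forall>x t. reg c x t \<longrightarrow> HD dir u du x t" using xmul by blast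
  show ?case
  proof (cases dir)
    case None
    have "(\<lambda>x t. x $ i * du x t) \<in> Scl c" by (intro Scl.intros du)
    moreover have "\<forall>x t. reg c x t \<longrightarrow> HD dir (\<lambda>x t. x $ i * u x t) (\<lambda>x t. x $ i * du x t) x t"
      using du(2) unfolding HD_def None by (auto intro!: DERIV_cmult)
    ultimately show ?thesis by blast
  next
    case (Some j)
    have "(\<lambda>x t. axis j 1 $ i * u x t + x $ i * du x t) \<in> Scl c" by (intro Scl.intros du xmul)
    moreover have "\<forall>x t. reg c x t \<longrightarrow> HD dir (\<lambda>x t. x $ i * u x t) (\<lambda>x t. axis j 1 $ i * u x t + x $ i * du x t) x t"
    proof (intro allI impI)
      fix x :: "real ^ 'n" and t assume "reg c x t"
      hence d: "((\<lambda>s. u (x + s *\<^sub>R axis j 1) t) has_real_derivative du x t) (at 0)"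
        using du(2) unfolding HD_def Some by simp
      have l: "((\<lambda>s. (x + s *\<^sub>R axis j 1) $ i) has_real_derivative axis j 1 $ i) (at 0)"
      proof -
        have e: "(\<lambda>s. (x + s *\<^sub>R axis j 1) $ i) = (\<lambda>s. x $ i + s * axis j 1 $ i)" by (rule ext) simp
        have "((\<lambda>s. x $ i + s * axis j 1 $ i) has_real_derivative axis j 1 $ i) (at 0)"
          by (auto intro!: derivative_eq_intros)
        thus ?thesis unfolding e .
      qed
      have "((\<lambda>s. (x + s *\<^sub>R axis j 1) $ i * u (x + s *\<^sub>R axis j 1) t) has_real_derivative
              axis j 1 $ i * u (x + 0 *\<^sub>R axis j 1) t + du x t * (x + 0 *\<^sub>R axis j 1) $ i) (at 0)"
        by (rule DERIV_mult[OF l d])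
      thus "HD dir (\<lambda>x t. x $ i * u x t) (\<lambda>x t. axis j 1 $ i * u x t + x $ i * du x t) x t"
        unfolding HD_def Some by (simp add: mult.commute)
    qed
    ultimately show ?thesis by blast
  qed
qed

lemma HD_pd:
  assumes "HD dir u v x t" shows "pd dir u x t = v x t \<and> pdiff dir u x t"
  using assms unfolding HD_def pd_def pdiff_def
  by (cases dir) (auto intro: DERIV_imp_deriv simp: real_differentiable_def)

lemma Scl_all_derivs:
  assumes c: "c > 0" and w: "w \<in> Scl c" and a: "agree c f w"
  shows "\<exists>w' \<in> Scl c. agree c (foldr pd ds f) w'"
proof (induction ds)
  case Nil then show ?case using w a by auto
next
  case (Cons dir ds)
  then obtain w' where w': "w' \<in> Scl c" "agree c (foldr pd ds f) w'" by blast
  obtain v where v: "v \<in> Scl c" "\<forall>x t. reg c x t \<longrightarrow> HD dir w' v x t" using Scl_deriv[OF c w'(1)] by blast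
  have "agree c (pd dir (foldr pd ds f)) (pd dir w')" by (rule agree_pd[OF c w'(2)])
  moreover have "agree c (pd dir w') v" unfolding agree_def using v(2) HD_pd by blast
  ultimately have "agree c (pd dir (foldr pd ds f)) v" unfolding agree_def by simp
  thus ?case using v(1) by auto
qed

lemma Scl_all_pdiff:
  assumes c: "c > 0" and w: "w \<in> Scl c" and a: "agree c f w" and r: "reg c x t"
  shows "pdiff dir (foldr pd ds f) x t"
proof -
  obtain w' where w': "w' \<in> Scl c" "agree c (foldr pd ds f) w'" using Scl_all_derivs[OF c w a] by blast
  obtain v where v: "v \<in> Scl c" "\<forall>x t. reg c x t \<longrightarrow> HD dir w' v x t" using Scl_deriv[OF c w'(1)] by blast
  have "pdiff dir w' x t" using HD_pd v(2) r by blast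
  thus ?thesis using pd_loc[OF c w'(2) r] by simp
qed




lemma pd_None_Phi:
  assumes c: "c > 0" and b: "allconv b"
  shows "agree c (pd None (Phi c b J)) (\<lambda>x t. c\<^sup>2 * (t * Phi c (dco J b) (J+2) x t))"
  unfolding agree_def pd_def option.case
proof (intro allI impI)
  fix x t assume r: "reg c x t"
  show "deriv (\<lambda>s. Phi c b J x s) t = c\<^sup>2 * (t * Phi c (dco J b) (J + 2) x t)"
    using DERIV_imp_deriv[OF DPhi_None[OF c r b]] by (simp add: mult.assoc)
qed

lemma pd_Some_Phi:
  fixes j :: "'n::finite"
  assumes c: "c > 0" and b: "allconv b"
  shows "agree c (pd (Some j) (Phi c b J)) (\<lambda>x t. - (x $ j * Phi c (dco J b) (J+2) x t))"
  unfolding agree_def pd_def option.case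
proof (intro allI impI)
  fix x :: "real ^ 'n" and t assume r: "reg c x t"
  show "deriv (\<lambda>s. Phi c b J (x + s *\<^sub>R axis j 1) t) 0 = - (x $ j * Phi c (dco J b) (J + 2) x t)"
    using DERIV_imp_deriv[OF DPhi_Some[OF c r b]] by simp
qed

lemma pdNN_Phi:
  assumes c: "c > 0" and b: "allconv b" and r: "reg c x t"
  shows "pd None (pd None (Phi c b J)) x t =
     c\<^sup>2 * Phi c (dco J b) (J+2) x t + c\<^sup>2 * c\<^sup>2 * t\<^sup>2 * Phi c (dco (J+2) (dco J b)) (J+2+2) x t"
proof -
  have b1: "allconv (dco J b)" by (rule allconv_dco[OF b])
  have "pd None (pd None (Phi c b J)) x t = pd None (\<lambda>x t. c\<^sup>2 * (t * Phi c (dco J b) (J+2) x t)) x t"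
    using pd_loc[OF c pd_None_Phi[OF c b] r] by simp
  also have "\<dots> = c\<^sup>2 * (1 * Phi c (dco J b) (J+2) x t + c\<^sup>2 * t * Phi c (dco (J+2) (dco J b)) (J+2+2) x t * t)"
    unfolding pd_def option.case
    by (rule DERIV_imp_deriv, rule DERIV_cmult, rule DERIV_mult[OF DERIV_ident DPhi_None[OF c r b1]])
  also have "\<dots> = c\<^sup>2 * Phi c (dco J b) (J+2) x t + c\<^sup>2 * c\<^sup>2 * t\<^sup>2 * Phi c (dco (J+2) (dco J b)) (J+2+2) x t"
    by (simp add: algebra_simps power2_eq_square)
  finally show ?thesis .
qed

lemma pdSS_Phi:
  fixes x :: "real ^ 'n"
  assumes c: "c > 0" and b: "allconv b" and r: "reg c x t"
  shows "pd (Some j) (pd (Some j) (Phi c b J)) x t =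
     - Phi c (dco J b) (J+2) x t + (x $ j)\<^sup>2 * Phi c (dco (J+2) (dco J b)) (J+2+2) x t"
proof -
  have b1: "allconv (dco J b)" by (rule allconv_dco[OF b])
  have "pd (Some j) (pd (Some j) (Phi c b J)) x t = pd (Some j) (\<lambda>x t. - (x $ j * Phi c (dco J b) (J+2) x t)) x t"
    using pd_loc[OF c pd_Some_Phi[OF c b] r] by simp
  also have "\<dots> = - (1 * Phi c (dco J b) (J+2) x t + - (x $ j) * Phi c (dco (J+2) (dco J b)) (J+2+2) x t * x $ j)"
  proof -
    have e: "(\<lambda>s. (x + s *\<^sub>R axis j 1) $ j) = (\<lambda>s. x $ j + s)" by (rule ext) simp
    have l: "((\<lambda>s. (x + s *\<^sub>R axis j 1) $ j) has_real_derivative 1) (at 0)"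
      unfolding e by (auto intro!: derivative_eq_intros)
    have "((\<lambda>s. - ((x + s *\<^sub>R axis j 1) $ j * Phi c (dco J b) (J+2) (x + s *\<^sub>R axis j 1) t)) has_real_derivative
        - (1 * Phi c (dco J b) (J+2) (x + 0 *\<^sub>R axis j 1) t + - (x $ j) * Phi c (dco (J+2) (dco J b)) (J+2+2) x t * (x + 0 *\<^sub>R axis j 1) $ j)) (at 0)"
      by (rule DERIV_minus, rule DERIV_mult[OF l DPhi_Some[OF c r b1]])
    thus ?thesis unfolding pd_def option.case by (intro DERIV_imp_deriv) simp
  qed
  also have "\<dots> = - Phi c (dco J b) (J+2) x t + (x $ j)\<^sup>2 * Phi c (dco (J+2) (dco J b)) (J+2+2) x t"
    by (simp add: algebra_simps power2_eq_square)
  finally show ?thesis .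
qed

definition kgc :: "nat \<Rightarrow> nat \<Rightarrow> (nat \<Rightarrow> real) \<Rightarrow> nat \<Rightarrow> real" where
  "kgc d J b n = (real n - real J) * (real n - real J + real d - 1) * b n"

lemma kgc_eq: "kgc d J b n = (1 + real d) * dco J b n + dco (J+2) (dco J b) n"
  by (simp add: kgc_def dco_def algebra_simps)

lemma allconv_lin:
  assumes "allconv b" "allconv e"
  shows "allconv (\<lambda>n. a * b n + e n)"
  unfolding allconv_def
proof
  fix y
  have "(\<lambda>n. a * (b n * y ^ n) + e n * y ^ n) sums (a * PS b y + PS e y)"
    by (intro sums_add sums_mult PS_sums assms)
  thus "summable (\<lambda>n. (a * b n + e n) * y ^ n)" by (simp add: sums_summable algebra_simps)
qed

lemma PS_lin:
  assumes "allconv b" "allconv e"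
  shows "PS (\<lambda>n. a * b n + e n) y = a * PS b y + PS e y"
proof -
  have "(\<lambda>n. a * (b n * y ^ n) + e n * y ^ n) sums (a * PS b y + PS e y)"
    by (intro sums_add sums_mult PS_sums assms)
  moreover have "(\<lambda>n. a * (b n * y ^ n) + e n * y ^ n) = (\<lambda>n. (a * b n + e n) * y ^ n)"
    by (rule ext) (simp add: algebra_simps)
  ultimately have "(\<lambda>n. (a * b n + e n) * y ^ n) sums (a * PS b y + PS e y)" by simp
  thus ?thesis unfolding PS_def[of "\<lambda>n. a * b n + e n"] by (rule sums_unique[symmetric])
qed

lemma allconv_kgc: "allconv b \<Longrightarrow> allconv (kgc d J b)"
proof -
  assume b: "allconv b"
  have "kgc d J b = (\<lambda>n. (1 + real d) * dco J b n + dco (J+2) (dco J b) n)"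
    by (rule ext) (rule kgc_eq)
  thus ?thesis using allconv_lin[OF allconv_dco[OF b] allconv_dco[OF allconv_dco[OF b]]] by simp
qed

lemma sum_sq_norm: "(\<Sum>j\<in>UNIV. (x $ j)\<^sup>2) = (norm (x :: real ^ 'n))\<^sup>2"
proof -
  have "(norm x)\<^sup>2 = x \<bullet> x" by (simp add: dot_square_norm)
  also have "\<dots> = (\<Sum>j\<in>UNIV. x $ j * x $ j)" by (simp add: inner_vec_def)
  finally show ?thesis by (simp add: power2_eq_square)
qed

lemma KG_Phi:
  fixes x :: "real ^ 'n"
  assumes c: "c > 0" and b: "allconv b" and r: "reg c x t"
  shows "KG c (Phi c b J) x t = c\<^sup>2 * Phi c (kgc CARD('n) J b) (J+2) x t"
proof -
  define P1 where "P1 = Phi c (dco J b) (J+2) x t"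
  define P2 where "P2 = Phi c (dco (J+2) (dco J b)) (J+2+2) x t"
  have "(\<Sum>j\<in>UNIV. pd (Some j) (pd (Some j) (Phi c b J)) x t) = (\<Sum>j\<in>UNIV. - P1 + (x $ j)\<^sup>2 * P2)"
    using pdSS_Phi[OF c b r] unfolding P1_def P2_def by simp
  also have "\<dots> = - real CARD('n) * P1 + (norm x)\<^sup>2 * P2"
    by (simp add: sum_subtractf sum_distrib_right[symmetric] sum_sq_norm)
  finally have S: "(\<Sum>j\<in>UNIV. pd (Some j) (pd (Some j) (Phi c b J)) x t) = - real CARD('n) * P1 + (norm x)\<^sup>2 * P2" .
  have K: "KG c (Phi c b J) x t = c\<^sup>2 * ((1 + real CARD('n)) * P1 + (c\<^sup>2 * t\<^sup>2 - (norm x)\<^sup>2) * P2)"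
    unfolding KG_def S pdNN_Phi[OF c b r] P1_def[symmetric] P2_def[symmetric] by (simp add: algebra_simps)
  have Y: "Yf c x t > 0" by (rule reg_Y[OF c r])
  have Y2: "c\<^sup>2 * t\<^sup>2 - (norm x)\<^sup>2 = (Yf c x t)\<^sup>2" by (rule Y_sq[OF c r, symmetric])
  have "(1 + real CARD('n)) * P1 + (c\<^sup>2 * t\<^sup>2 - (norm x)\<^sup>2) * P2
      = ((1 + real CARD('n)) * PS (dco J b) (Yf c x t) + PS (dco (J+2) (dco J b)) (Yf c x t)) / (Yf c x t) ^ (J+2)"
    unfolding P1_def P2_def Phi_def Y2 using Y by (simp add: field_simps power2_eq_square)
  also have "\<dots> = Phi c (kgc CARD('n) J b) (J+2) x t"
  proof -
    have "kgc CARD('n) J b = (\<lambda>n. (1 + real CARD('n)) * dco J b n + dco (J+2) (dco J b) n)"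
      by (rule ext) (rule kgc_eq)
    thus ?thesis unfolding Phi_def
      using PS_lin[OF allconv_dco[OF b] allconv_dco[OF allconv_dco[OF b]]] by simp
  qed
  finally show ?thesis using K by simp
qed

lemma agree_KG:
  assumes c: "c > 0" and a: "agree c u v"
  shows "agree c (KG c u) (KG c v)"
proof -
  have "\<And>dir. agree c (pd dir (pd dir u)) (pd dir (pd dir v))"
    by (intro agree_pd[OF c] agree_pd[OF c a])
  thus ?thesis unfolding agree_def KG_def by simp
qed

lemma Phi_scale: "allconv b \<Longrightarrow> Phi c (\<lambda>n. a * b n) J x t = a * Phi c b J x t"
proof -
  assume b: "allconv b"
  have "allconv (\<lambda>n. 0)" unfolding allconv_def by simp
  from PS_lin[OF b this, of a] have "PS (\<lambda>n. a * b n) y = a * PS b y" for y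
    by (simp add: PS_def)
  thus ?thesis by (simp add: Phi_def)
qed

fun Eit :: "real \<Rightarrow> nat \<Rightarrow> nat \<Rightarrow> (nat \<Rightarrow> real) \<Rightarrow> nat \<Rightarrow> nat \<Rightarrow> real" where
  "Eit c d J b 0 = b"
| "Eit c d J b (Suc n) = (\<lambda>k. c\<^sup>2 * kgc d (J + 2*n) (Eit c d J b n) k)"

lemma allconv_Eit: "allconv b \<Longrightarrow> allconv (Eit c d J b n)"
proof (induction n)
  case 0 then show ?case by simp
next
  case (Suc n)
  have "allconv (\<lambda>k. c\<^sup>2 * kgc d (J + 2*n) (Eit c d J b n) k + 0)"
    by (intro allconv_lin allconv_kgc Suc) (simp add: allconv_def)
  thus ?case by simp
qed

lemma KG_iter:
  assumes c: "c > 0" and b: "allconv b"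
  shows "agree c ((KG c ^^ n) (Phi c b J :: real ^ 'n \<Rightarrow> real \<Rightarrow> real)) (Phi c (Eit c CARD('n) J b n) (J + 2*n))"
proof (induction n)
  case 0 then show ?case by (simp add: agree_def)
next
  case (Suc n)
  have a1: "agree c ((KG c ^^ Suc n) (Phi c b J :: real ^ 'n \<Rightarrow> real \<Rightarrow> real)) (KG c (Phi c (Eit c CARD('n) J b n) (J + 2*n)))"
    using agree_KG[OF c Suc] by simp
  have "agree c (KG c (Phi c (Eit c CARD('n) J b n) (J + 2*n) :: real ^ 'n \<Rightarrow> real \<Rightarrow> real))
      (Phi c (Eit c CARD('n) J b (Suc n)) (J + 2 * Suc n))"
    unfolding agree_def
  proof (intro allI impI)
    fix x :: "real ^ 'n" and t assume r: "reg c x t"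
    have "KG c (Phi c (Eit c CARD('n) J b n) (J + 2*n)) x t
          = c\<^sup>2 * Phi c (kgc CARD('n) (J + 2*n) (Eit c CARD('n) J b n)) (J + 2*n + 2) x t"
      by (rule KG_Phi[OF c allconv_Eit[OF b] r])
    also have "\<dots> = Phi c (\<lambda>k. c\<^sup>2 * kgc CARD('n) (J + 2*n) (Eit c CARD('n) J b n) k) (J + 2*n + 2) x t"
      by (rule Phi_scale[symmetric, OF allconv_kgc[OF allconv_Eit[OF b]]])
    also have "\<dots> = Phi c (Eit c CARD('n) J b (Suc n)) (J + 2 * Suc n) x t" by simp
    finally show "KG c (Phi c (Eit c CARD('n) J b n) (J + 2*n)) x t = Phi c (Eit c CARD('n) J b (Suc n)) (J + 2 * Suc n) x t" .
  qed
  with a1 show ?case unfolding agree_def by simp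
qed




definition Aco :: "real \<Rightarrow> real \<Rightarrow> nat \<Rightarrow> nat \<Rightarrow> real" where
  "Aco c lam N k = (lam / (2 * c)) ^ (k * N) / (Gamma (real k / 2 * real N) * Gamma (real N / 2 * (real k + 1)))"

definition Bco :: "real \<Rightarrow> real \<Rightarrow> nat \<Rightarrow> nat \<Rightarrow> real" where
  "Bco c lam N n = (if 0 < n \<and> N dvd n then Aco c lam N (n div N) else 0)"

lemma summable_ML2:
  fixes X :: real assumes N: "N \<ge> 1"
  shows "summable (\<lambda>k. X ^ k / Gamma (real N * real k + real N))"
proof (rule ratio_summable[where g = "\<lambda>k. real N * real k + real N", OF N])
  fix k
  have "1 * real k \<le> real N * real k" by (rule mult_right_mono) (use N in auto)
  thus "real N * real k + real N \<ge> real k / 2" by simp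
  show p: "real N * real k + real N > 0" using N by (intro add_nonneg_pos) auto
  show "Gamma (real N * real k + real N) > 0" using p by (rule Gamma_real_pos)
  have "Gamma (real N * real (Suc k) + real N) = Gamma ((real N * real k + real N) + real N)"
    by (simp add: algebra_simps)
  also have "\<dots> = pochhammer (real N * real k + real N) N * Gamma (real N * real k + real N)"
    by (rule Gamma_shift_poch[OF p])
  finally show "Gamma (real N * real (Suc k) + real N) = pochhammer (real N * real k + real N) N * Gamma (real N * real k + real N)" .
qed

lemma summable_A:
  fixes Z :: real assumes N: "N \<ge> 1"
  shows "summable (\<lambda>k. Z ^ k / (Gamma (real (Suc k) / 2 * real N) * Gamma (real N / 2 * (real (Suc k) + 1))))"
proof (rule ratio_summable[where g = "\<lambda>k. real (Suc k) / 2 * real N", OF N])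
  fix k
  have "real (Suc k) / 2 * real N \<ge> real (Suc k) / 2 * 1" using N by (intro mult_left_mono) auto
  thus "real (Suc k) / 2 * real N \<ge> real k / 2" by simp
  show "real (Suc k) / 2 * real N > 0" using N by simp
  show "Gamma (real (Suc k) / 2 * real N) * Gamma (real N / 2 * (real (Suc k) + 1)) > 0" using N by simp
  have e1: "real (Suc (Suc k)) / 2 * real N = real N / 2 * (real (Suc k) + 1)" by (simp add: algebra_simps)
  have e2: "real N / 2 * (real (Suc (Suc k)) + 1) = real (Suc k) / 2 * real N + real N" by (simp add: algebra_simps)
  have g: "Gamma (real (Suc k) / 2 * real N + real N) = pochhammer (real (Suc k) / 2 * real N) N * Gamma (real (Suc k) / 2 * real N)"
    by (rule Gamma_shift_poch) (use N in simp)
  show "Gamma (real (Suc (Suc k)) / 2 * real N) * Gamma (real N / 2 * (real (Suc (Suc k)) + 1)) =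
      pochhammer (real (Suc k) / 2 * real N) N * (Gamma (real (Suc k) / 2 * real N) * Gamma (real N / 2 * (real (Suc k) + 1)))"
    unfolding e1 e2 g by (simp add: algebra_simps)
qed

lemma summable_reindex:
  assumes "strict_mono g" "\<And>n. n \<notin> range g \<Longrightarrow> f n = 0"
  shows "summable (\<lambda>n. f (g n)) \<longleftrightarrow> summable f"
proof -
  have H: "\<And>s. (\<lambda>n. f (g n)) sums s \<longleftrightarrow> f sums s" by (rule sums_mono_reindex[OF assms])
  show ?thesis unfolding summable_def using H by blast
qed

lemma Bco_reindex:
  assumes N: "N \<ge> 1"
  shows "strict_mono (\<lambda>k. Suc k * N)" and "\<And>n. n \<notin> range (\<lambda>k. Suc k * N) \<Longrightarrow> Bco c lam N n * y ^ n = 0"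
proof -
  show "strict_mono (\<lambda>k. Suc k * N)" unfolding strict_mono_def using N by simp
  fix n assume n: "n \<notin> range (\<lambda>k. Suc k * N)"
  have "\<not> (0 < n \<and> N dvd n)"
  proof
    assume h: "0 < n \<and> N dvd n"
    then obtain q where q: "n = N * q" by (auto elim: dvdE)
    with h have "q > 0" by (cases q) auto
    then obtain p where "q = Suc p" by (cases q) auto
    hence "n = Suc p * N" using q by simp
    thus False using n by auto
  qed
  hence "Bco c lam N n = 0" unfolding Bco_def by (rule if_not_P)
  thus "Bco c lam N n * y ^ n = 0" by simp
qed

lemma Bco_at: "N \<ge> 1 \<Longrightarrow> Bco c lam N (Suc k * N) = Aco c lam N (Suc k)"
  by (simp add: Bco_def)

lemma allconv_B:
  assumes N: "N \<ge> 1"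
  shows "allconv (Bco c lam N)"
  unfolding allconv_def
proof
  fix y
  define Z where "Z = (lam / (2 * c) * y) ^ N"
  have "summable (\<lambda>k. Z * (Z ^ k / (Gamma (real (Suc k) / 2 * real N) * Gamma (real N / 2 * (real (Suc k) + 1)))))"
    by (intro summable_mult summable_A N)
  moreover have "(\<lambda>k. Z * (Z ^ k / (Gamma (real (Suc k) / 2 * real N) * Gamma (real N / 2 * (real (Suc k) + 1)))))
     = (\<lambda>k. Bco c lam N (Suc k * N) * y ^ (Suc k * N))"
  proof (rule ext)
    fix k
    have "Z * Z ^ k = Z ^ Suc k" by simp
    also have "\<dots> = (lam / (2 * c) * y) ^ (N * Suc k)" unfolding Z_def by (rule power_mult[symmetric])
    also have "\<dots> = (lam / (2 * c)) ^ (Suc k * N) * y ^ (Suc k * N)" by (simp only: power_mult_distrib mult.commute)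
    finally have "Z * Z ^ k = (lam / (2 * c)) ^ (Suc k * N) * y ^ (Suc k * N)" .
    thus "Z * (Z ^ k / (Gamma (real (Suc k) / 2 * real N) * Gamma (real N / 2 * (real (Suc k) + 1))))
        = Bco c lam N (Suc k * N) * y ^ (Suc k * N)"
      unfolding Bco_at[OF N] Aco_def by (simp add: field_simps del: of_nat_Suc)
  qed
  ultimately have "summable (\<lambda>k. Bco c lam N (Suc k * N) * y ^ (Suc k * N))" by simp
  moreover have "summable (\<lambda>k. (\<lambda>n. Bco c lam N n * y ^ n) (Suc k * N)) \<longleftrightarrow> summable (\<lambda>n. Bco c lam N n * y ^ n)"
    by (rule summable_reindex) (use Bco_reindex[OF N] in auto)
  ultimately show "summable (\<lambda>n. Bco c lam N n * y ^ n)" by simp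
qed




lemma Eit_closed:
  "Eit c d J b n k = (c\<^sup>2) ^ n * (\<Prod>i<n. (real k - real (J + 2*i)) * (real k - real (J + 2*i) + real d - 1)) * b k"
proof (induction n)
  case 0 then show ?case by simp
next
  case (Suc n)
  show ?case by (simp add: Suc kgc_def algebra_simps)
qed

lemma prod_poch2:
  "(\<Prod>i<n. (2 * x - real (2 + 2*i))) = 2 ^ n * pochhammer (x - real n) n"
proof (induction n)
  case 0 then show ?case by simp
next
  case (Suc n)
  have "(\<Prod>i<Suc n. (2 * x - real (2 + 2*i))) = 2 ^ n * pochhammer (x - real n) n * (2 * x - real (2 + 2*n))"
    by (simp only: prod.lessThan_Suc Suc.IH)
  also have "\<dots> = 2 ^ Suc n * ((x - real (Suc n)) * pochhammer (x - real n) n)"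
    by (simp add: algebra_simps)
  also have "(x - real (Suc n)) * pochhammer (x - real n) n = pochhammer (x - real (Suc n)) (Suc n)"
    by (simp add: pochhammer_rec algebra_simps)
  finally show ?case .
qed

lemma coef_main:
  assumes N: "N \<ge> 1" and c: "c > 0"
  shows "Eit c (Suc N) 2 (Bco c lam N) N k = (if 2*N \<le> k then lam ^ (2*N) * Bco c lam N (k - 2*N) else 0)"
proof -
  define P where "P = (\<Prod>i<N. (real k - real (2 + 2*i)) * (real k - real (2 + 2*i) + real N))"
  have E: "Eit c (Suc N) 2 (Bco c lam N) N k = (c\<^sup>2) ^ N * P * Bco c lam N k"
  proof -
    have E0: "\<And>i. (real k - real (2 + 2*i)) * (real k - real (2 + 2*i) + real (Suc N) - 1) = (real k - real (2 + 2*i)) * (real k - real (2 + 2*i) + real N)"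
      by simp
    show ?thesis by (simp only: Eit_closed E0 P_def)
  qed
  show ?thesis
  proof (cases "0 < k \<and> N dvd k")
    case False
    have B0: "Bco c lam N k = 0" using False unfolding Bco_def by (rule if_not_P)
    have "2*N \<le> k \<Longrightarrow> Bco c lam N (k - 2*N) = 0"
    proof -
      assume le: "2*N \<le> k"
      have "\<not> (0 < k - 2*N \<and> N dvd (k - 2*N))"
      proof
        assume h: "0 < k - 2*N \<and> N dvd (k - 2*N)"
        hence "N dvd (k - 2*N + 2*N)" by (intro dvd_add) auto
        hence "N dvd k" using le by simp
        thus False using False h by simp
      qed
      thus ?thesis unfolding Bco_def by (rule if_not_P)
    qed
    thus ?thesis unfolding E B0 by simp
  next
    case True
    then obtain j where kj: "k = j * N" by (auto elim!: dvdE simp: mult.commute)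
    have jpos: "j \<ge> 1" using True kj by (cases j) auto
    have kdiv: "k div N = j" using kj N by simp
    have Bk: "Bco c lam N k = Aco c lam N j" using True kdiv by (simp add: Bco_def)
    consider "j = 1" | "j = 2" | p where "j = p + 3"
    proof -
      assume h1: "j = 1 \<Longrightarrow> thesis" and h2: "j = 2 \<Longrightarrow> thesis" and h3: "\<And>p. j = p + 3 \<Longrightarrow> thesis"
      have "j = 1 \<or> j = 2 \<or> j \<ge> 3" using jpos by linarith
      moreover have "j \<ge> 3 \<Longrightarrow> thesis" by (rule h3[of "j - 3"]) simp
      ultimately show thesis using h1 h2 by blast
    qed
    then show ?thesis
    proof cases
      case 1
      have "P = 0" unfolding P_def
      proof (rule prod_zero)
        show "\<exists>i\<in>{..<N}. (real k - real (2 + 2*i)) * (real k - real (2 + 2*i) + real N) = 0"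
          by (rule bexI[of _ "N - 1"]) (use N kj 1 in \<open>auto simp: of_nat_diff\<close>)
      qed simp
      moreover have "\<not> 2*N \<le> k" using kj 1 N by simp
      ultimately show ?thesis unfolding E by simp
    next
      case 2
      have "P = 0" unfolding P_def
      proof (rule prod_zero)
        show "\<exists>i\<in>{..<N}. (real k - real (2 + 2*i)) * (real k - real (2 + 2*i) + real N) = 0"
          by (rule bexI[of _ "N - 1"]) (use N kj 2 in \<open>auto simp: of_nat_diff\<close>)
      qed simp
      moreover have "2*N \<le> k" "k - 2*N = 0" using kj 2 by auto
      moreover have "Bco c lam N 0 = 0" by (simp add: Bco_def)
      ultimately show ?thesis unfolding E by simp
    next
      case 3
      define a where "a = real (Suc p) / 2 * real N"
      define b where "b = real N / 2 * (real (Suc p) + 1)"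
      have apos: "a > 0" "b > 0" using N by (auto simp: a_def b_def)
      have ka: "real k / 2 - real N = a" unfolding a_def kj 3 by (simp add: field_simps)
      have kb: "(real k + real N) / 2 - real N = b" unfolding b_def kj 3 by (simp add: field_simps)
      have P1: "(\<Prod>i<N. (real k - real (2 + 2*i))) = 2 ^ N * pochhammer a N"
        using prod_poch2[where n=N and x="real k / 2"] unfolding ka by simp
      have P2: "(\<Prod>i<N. (real k - real (2 + 2*i) + real N)) = 2 ^ N * pochhammer b N"
      proof -
        have t: "2 * ((real k + real N) / 2) = real k + real N" by simp
        have "(\<Prod>i<N. (real k - real (2 + 2*i) + real N)) = (\<Prod>i<N. (2 * ((real k + real N) / 2) - real (2 + 2*i)))"
          unfolding t by (simp add: algebra_simps)
        thus ?thesis using prod_poch2[where n=N and x="(real k + real N) / 2"] unfolding kb by simp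
      qed
      have PP: "P = 4 ^ N * pochhammer a N * pochhammer b N"
        unfolding P_def prod.distrib P1 P2 by (simp add: power_mult_distrib[symmetric] algebra_simps)
      have Ga: "Gamma (real j / 2 * real N) = pochhammer a N * Gamma a"
      proof -
        have e: "real j / 2 * real N = a + real N" unfolding a_def 3 by (simp add: field_simps)
        show ?thesis unfolding e by (rule Gamma_shift_poch[OF apos(1)])
      qed
      have Gb: "Gamma (real N / 2 * (real j + 1)) = pochhammer b N * Gamma b"
      proof -
        have e: "real N / 2 * (real j + 1) = b + real N" unfolding b_def 3 by (simp add: field_simps)
        show ?thesis unfolding e by (rule Gamma_shift_poch[OF apos(2)])
      qed
      have pa: "pochhammer a N > 0" "pochhammer b N > 0"
        using poch_ge1 apos by (auto simp: pochhammer_pos)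
      have gpos: "Gamma a > 0" "Gamma b > 0" using apos by auto
      have le: "2*N \<le> k" and kd: "k - 2*N = Suc p * N" using kj 3 by (auto simp: algebra_simps)
      have Bk2: "Bco c lam N (k - 2*N) = Aco c lam N (Suc p)"
        unfolding kd using Bco_at[OF N] .
      have A2: "Aco c lam N (Suc p) = (lam / (2 * c)) ^ (Suc p * N) / (Gamma a * Gamma b)"
        unfolding Aco_def a_def b_def ..
      have A1: "Aco c lam N j = (lam / (2 * c)) ^ (j * N) / (pochhammer a N * Gamma a * (pochhammer b N * Gamma b))"
        unfolding Aco_def Ga Gb ..
      have pw: "(c\<^sup>2) ^ N * 4 ^ N * (lam / (2 * c)) ^ (j * N) = lam ^ (2 * N) * (lam / (2 * c)) ^ (Suc p * N)"
      proof -
        have en: "j * N = 2 * N + Suc p * N" unfolding 3 by (simp add: algebra_simps)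
        have "(lam / (2 * c)) ^ (j * N) = (lam / (2 * c)) ^ (2 * N) * (lam / (2 * c)) ^ (Suc p * N)"
          unfolding en by (rule power_add)
        also have "(lam / (2 * c)) ^ (2 * N) = ((lam / (2 * c))\<^sup>2) ^ N" by (rule power_mult)
        finally have "(lam / (2 * c)) ^ (j * N) = ((lam / (2 * c))\<^sup>2) ^ N * (lam / (2 * c)) ^ (Suc p * N)" .
        moreover have "(c\<^sup>2) ^ N * 4 ^ N * ((lam / (2 * c))\<^sup>2) ^ N = lam ^ (2 * N)"
        proof -
          have "c\<^sup>2 * 4 * (lam / (2 * c))\<^sup>2 = lam\<^sup>2" using c by (simp add: field_simps power2_eq_square)
          hence "(c\<^sup>2 * 4 * (lam / (2 * c))\<^sup>2) ^ N = (lam\<^sup>2) ^ N" by simp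
          thus ?thesis by (simp add: power_mult_distrib power_mult)
        qed
        ultimately show ?thesis by (simp add: mult.assoc[symmetric])
      qed
      have "Eit c (Suc N) 2 (Bco c lam N) N k
          = (c\<^sup>2) ^ N * 4 ^ N * (lam / (2 * c)) ^ (j * N) / (Gamma a * Gamma b)"
        unfolding E PP Bk A1 using pa gpos by (simp add: field_simps)
      also have "\<dots> = lam ^ (2 * N) * Bco c lam N (k - 2*N)"
        unfolding pw Bk2 A2 by simp
      finally show ?thesis using le by simp
    qed
  qed
qed




lemma dupM:
  assumes M: "M \<ge> 1"
  shows "Gamma (real M / 2) * Gamma (real M / 2 + 1/2) * 2 ^ (M - 1) = sqrt pi * Gamma (real M)"
proof -
  have p: "real M / 2 > 0" using M by simp
  have D: "Gamma (real M / 2) * Gamma (real M / 2 + 1/2) = 2 powr (1 - real M) * sqrt pi * Gamma (real M)"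
    using Gamma_dup_real[OF p] by simp
  have "(2::real) ^ (M - 1) = 2 powr real (M - 1)" by (simp add: powr_realpow)
  also have "real (M - 1) = real M - 1" using M by (simp add: of_nat_diff)
  finally have "(2::real) ^ (M - 1) = 2 powr (real M - 1)" .
  hence "2 powr (1 - real M) * (2::real) ^ (M - 1) = 2 powr ((1 - real M) + (real M - 1))"
    by (simp only: powr_add)
  hence pw: "2 powr (1 - real M) * (2::real) ^ (M - 1) = 1" by simp
  have "Gamma (real M / 2) * Gamma (real M / 2 + 1/2) * 2 ^ (M - 1)
      = (2 powr (1 - real M) * (2::real) ^ (M - 1)) * (sqrt pi * Gamma (real M))"
    unfolding D by (simp only: mult_ac)
  thus ?thesis unfolding pw by simp
qed

lemma alg1:
  fixes Z X G1 G2 GM SP P Q :: real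
  assumes "G1 > 0" "G2 > 0" "P > 0" "SP > 0" "G1 * G2 * P = SP * GM" "Z * P = X * Q"
  shows "Z / (G2 * G1) = Q / SP * (X / GM)"
proof -
  have Z: "Z = X * Q / P" using assms(3,6) by (simp add: field_simps)
  have "Q / SP * (X / GM) = Q * X / (SP * GM)" by simp
  also have "SP * GM = G1 * G2 * P" using assms(5) by simp
  finally have R: "Q / SP * (X / GM) = Q * X / (G1 * G2 * P)" .
  show ?thesis unfolding R Z using assms(1-3) by (simp add: field_simps)
qed

lemma MLd_eq:
  assumes N: "N \<ge> 1" and d: "d = Suc N"
  shows "MLd d ((lam * t / 2) ^ (d - 1)) = 2 ^ (N - 1) / sqrt pi * ML2 (real d - 1) (real d - 1) ((lam * t) ^ (d - 1))"
proof -
  have d1: "d - 1 = N" "real d - 1 = real N" using d by auto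
  have T: "((lam * t / 2) ^ N) ^ k / (Gamma ((real k + 1) / 2 * real N + 1/2) * Gamma (real N / 2 * (real k + 1)))
      = 2 ^ (N - 1) / sqrt pi * (((lam * t) ^ N) ^ k / Gamma (real N * real k + real N))" for k
  proof -
    define M where "M = Suc k * N"
    have M1: "M \<ge> 1" using N by (simp add: M_def)
    have e1: "Gamma (real M / 2) = Gamma (real N / 2 * (real k + 1))" by (simp add: M_def algebra_simps)
    have e2: "Gamma (real M / 2 + 1/2) = Gamma ((real k + 1) / 2 * real N + 1/2)" by (simp add: M_def algebra_simps)
    have e3: "Gamma (real M) = Gamma (real N * real k + real N)" by (simp add: M_def algebra_simps)
    have dup: "Gamma (real N / 2 * (real k + 1)) * Gamma ((real k + 1) / 2 * real N + 1/2) * 2 ^ (M - 1)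
        = sqrt pi * Gamma (real N * real k + real N)"
      using dupM[OF M1] unfolding e1 e2 e3 .
    have Mm: "M - 1 = k * N + (N - 1)" using N by (simp add: M_def)
    have pw: "((lam * t / 2) ^ N) ^ k * 2 ^ (M - 1) = ((lam * t) ^ N) ^ k * 2 ^ (N - 1)"
    proof -
      have "((lam * t / 2) ^ N) ^ k * 2 ^ (k * N) = ((lam * t) ^ N) ^ k"
        by (simp add: power_mult[symmetric] power_divide mult.commute)
      thus ?thesis unfolding Mm power_add by (simp add: mult.assoc[symmetric])
    qed
    have g1: "Gamma (real N / 2 * (real k + 1)) > 0" "Gamma ((real k + 1) / 2 * real N + 1/2) > 0"
      "Gamma (real N * real k + real N) > 0" using N by (auto intro!: Gamma_real_pos add_nonneg_pos)
    have sp: "sqrt pi > 0" by simp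
    show ?thesis by (rule alg1[OF g1(1) g1(2) _ sp dup pw]) simp
  qed
  have S: "summable (\<lambda>k. ((lam * t) ^ N) ^ k / Gamma (real N * real k + real N))"
    by (rule summable_ML2[OF N])
  have "MLd d ((lam * t / 2) ^ (d - 1)) = (\<Sum>k. 2 ^ (N - 1) / sqrt pi * (((lam * t) ^ N) ^ k / Gamma (real N * real k + real N)))"
    unfolding MLd_def d1 T ..
  also have "\<dots> = 2 ^ (N - 1) / sqrt pi * (\<Sum>k. ((lam * t) ^ N) ^ k / Gamma (real N * real k + real N))"
    by (rule suminf_mult[OF S])
  also have "(\<Sum>k. ((lam * t) ^ N) ^ k / Gamma (real N * real k + real N)) = ML2 (real d - 1) (real d - 1) ((lam * t) ^ (d - 1))"
    unfolding ML2_def d1 ..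
  finally show ?thesis .
qed




lemma alg2:
  fixes Pp W E SP Ga Gb Gh GM S A Q CK TK LK :: real
  assumes pos: "Pp > 0" "W > 0" "Q > 0" "CK > 0" "TK > 0" "SP > 0" "E > 0" "Ga > 0" "Gb > 0" "Gh > 0"
    and dup: "Gb * Gh * (Q * TK) = SP * GM" and A: "A = LK / (CK * TK)"
  shows "A * S / (Ga * Gb) = Pp * W * (Q / SP * E) * (Gh / Ga * S / (Pp * (W * CK))) * (LK / GM / E)"
proof -
  have GM: "GM = Gb * Gh * (Q * TK) / SP" using dup pos by (simp add: field_simps)
  show ?thesis unfolding GM A using pos by (simp add: field_simps)
qed

lemma ML2_pos:
  assumes N: "N \<ge> 1" and d: "d = Suc N" and X: "X > 0"
  shows "ML2 (real d - 1) (real d - 1) X > 0"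
proof -
  have d1: "real d - 1 = real N" using d by simp
  show ?thesis unfolding ML2_def d1
  proof (rule suminf_pos[OF summable_ML2[OF N]])
    fix k
    have "real N * real k + real N > 0" using N by (intro add_nonneg_pos) auto
    thus "0 < X ^ k / Gamma (real N * real k + real N)" using X by simp
  qed
qed

lemma term_eq:
  fixes x :: "real ^ 'n"
  assumes N: "N \<ge> 1" and d: "d = Suc N" and c: "c > 0" and lam: "lam > 0" and t: "t > 0"
  defines "C \<equiv> pi powr (real d / 2) * (c * t) ^ (d - 2) * MLd d ((lam * t / 2) ^ (d - 1))"
  shows "(lam / (2 * c)) ^ (Suc k * (d - 1))
                  * (c\<^sup>2 * t\<^sup>2 - (norm x)\<^sup>2) powr (real (Suc k) / 2 * (real d - 1) - 1)
                  / (Gamma (real (Suc k) / 2 * (real d - 1)) * Gamma ((real d - 1) / 2 * (real (Suc k) + 1)))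
         = C * (pcond d c x t (Suc k) * probN d lam t (Suc k))"
proof -
  have d1: "d - 1 = N" "real d - 1 = real N" "d - 2 = N - 1" using d by auto
  define E where "E = ML2 (real d - 1) (real d - 1) ((lam * t) ^ (d - 1))"
  have Epos: "E > 0" unfolding E_def by (rule ML2_pos[OF N d]) (use lam t in simp)
  have MLe: "MLd d ((lam * t / 2) ^ (d - 1)) = 2 ^ (N - 1) / sqrt pi * E"
    unfolding E_def by (rule MLd_eq[OF N d])
  define S where "S = (c\<^sup>2 * t\<^sup>2 - (norm x)\<^sup>2) powr (real (Suc k) / 2 * real N - 1)"
  define K where "K = Suc k * N"
  define M where "M = Suc (Suc k) * N"
  have M1: "M \<ge> 1" using N by (simp add: M_def)
  have Mm: "M - 1 = (N - 1) + K" using N by (simp add: M_def K_def)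
  define G1 where "G1 = Gamma (real (Suc k) / 2 * real N)"
  define G2 where "G2 = Gamma (real N / 2 * (real (Suc k) + 1))"
  define G2h where "G2h = Gamma ((real (Suc k) + 1) / 2 * real N + 1 / 2)"
  define GM where "GM = Gamma (real M)"
  have gp: "G1 > 0" "G2 > 0" "G2h > 0" unfolding G1_def G2_def G2h_def using N
    by (auto intro!: Gamma_real_pos add_nonneg_pos)
  have dup: "G2 * G2h * (2 ^ (N - 1) * 2 ^ K) = sqrt pi * GM"
  proof -
    have e1: "Gamma (real M / 2) = G2" unfolding G2_def by (simp add: M_def algebra_simps)
    have e2: "Gamma (real M / 2 + 1/2) = G2h" unfolding G2h_def by (simp add: M_def algebra_simps)
    have "G2 * G2h * 2 ^ (M - 1) = sqrt pi * GM" using dupM[OF M1] unfolding e1 e2 GM_def .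
    thus ?thesis unfolding Mm power_add .
  qed
  have A: "(lam / (2 * c)) ^ K = (lam * t) ^ K / ((c * t) ^ K * 2 ^ K)"
    using t by (simp add: power_divide power_mult_distrib field_simps)
  have pc: "pcond d c x t (Suc k) = G2h / G1 * S / (pi powr (real d / 2) * ((c * t) ^ (N - 1) * (c * t) ^ K))"
  proof -
    have "(Suc k + 1) * (d - 1) - 1 = (N - 1) + K" unfolding d1(1) using Mm by (simp add: M_def)
    hence "(c * t) ^ ((Suc k + 1) * (d - 1) - 1) = (c * t) ^ (N - 1) * (c * t) ^ K" by (simp add: power_add)
    thus ?thesis unfolding pcond_def d1 G2h_def G1_def S_def by simp
  qed
  have pN: "probN d lam t (Suc k) = (lam * t) ^ K / GM / E"
    unfolding probN_def d1 GM_def E_def K_def M_def by simp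
  have lhs: "(lam / (2 * c)) ^ (Suc k * (d - 1))
                  * (c\<^sup>2 * t\<^sup>2 - (norm x)\<^sup>2) powr (real (Suc k) / 2 * (real d - 1) - 1)
                  / (Gamma (real (Suc k) / 2 * (real d - 1)) * Gamma ((real d - 1) / 2 * (real (Suc k) + 1)))
        = (lam / (2 * c)) ^ K * S / (G1 * G2)"
    unfolding d1 K_def S_def G1_def G2_def ..
  have X: "(lam / (2 * c)) ^ K * S / (G1 * G2) =
     pi powr (real d / 2) * (c * t) ^ (N - 1) * (2 ^ (N - 1) / sqrt pi * E) *
     (G2h / G1 * S / (pi powr (real d / 2) * ((c * t) ^ (N - 1) * (c * t) ^ K))) *
     ((lam * t) ^ K / GM / E)"
    by (rule alg2[OF _ _ _ _ _ _ Epos gp(1) gp(2) gp(3) dup A]) (use c t in auto)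
  show ?thesis unfolding lhs unfolding C_def pc pN MLe d1(3) using X by (simp only:)
qed

lemma powr_Y:
  assumes Y: "Y > 0"
  shows "(Y\<^sup>2) powr (real (Suc k) / 2 * real N - 1) = Y ^ (Suc k * N) / Y\<^sup>2"
proof -
  have Y2: "Y\<^sup>2 = Y powr 2" using powr_realpow[OF Y, of 2] by simp
  have "(Y\<^sup>2) powr (real (Suc k) / 2 * real N - 1) = Y powr (2 * (real (Suc k) / 2 * real N - 1))"
    unfolding Y2 by (rule powr_powr)
  also have "2 * (real (Suc k) / 2 * real N - 1) = real (Suc k * N) - 2" by (simp add: algebra_simps)
  also have "Y powr (real (Suc k * N) - 2) = Y powr real (Suc k * N) / Y powr 2" by (rule powr_diff)
  also have "Y powr real (Suc k * N) = Y ^ (Suc k * N)" by (rule powr_realpow[OF Y])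
  finally show ?thesis unfolding Y2 .
qed

lemma part1:
  fixes x :: "real ^ 'n"
  assumes N: "N \<ge> 1" and d: "d = Suc N" and c: "c > 0" and lam: "lam > 0" and r: "reg c x t"
  defines "F \<equiv> pi powr (real d / 2) * (c * t) ^ (d - 2) * MLd d ((lam * t / 2) ^ (d - 1)) * pX d c lam x t"
  shows "(\<lambda>k. (lam / (2 * c)) ^ (Suc k * (d - 1))
                  * (c\<^sup>2 * t\<^sup>2 - (norm x)\<^sup>2) powr (real (Suc k) / 2 * (real d - 1) - 1)
                  / (Gamma (real (Suc k) / 2 * (real d - 1)) * Gamma ((real d - 1) / 2 * (real (Suc k) + 1))))
            sums F"
    and "F = Phi c (Bco c lam N) 2 x t"
proof -
  have t: "t > 0" using r by (simp add: reg_def)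
  have d1: "d - 1 = N" "real d - 1 = real N" using d by auto
  define Y where "Y = Yf c x t"
  have Y: "Y > 0" unfolding Y_def by (rule reg_Y[OF c r])
  have s: "c\<^sup>2 * t\<^sup>2 - (norm x)\<^sup>2 = Y\<^sup>2" unfolding Y_def by (rule Y_sq[OF c r, symmetric])
  define Tm where "Tm = (\<lambda>k. (lam / (2 * c)) ^ (Suc k * (d - 1))
                  * (c\<^sup>2 * t\<^sup>2 - (norm x)\<^sup>2) powr (real (Suc k) / 2 * (real d - 1) - 1)
                  / (Gamma (real (Suc k) / 2 * (real d - 1)) * Gamma ((real d - 1) / 2 * (real (Suc k) + 1))))"
  have TB: "Tm k = Bco c lam N (Suc k * N) * Y ^ (Suc k * N) / Y\<^sup>2" for k
    unfolding Tm_def d1 s powr_Y[OF Y] Bco_at[OF N] Aco_def by simp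
  have sB: "(\<lambda>k. Bco c lam N (Suc k * N) * Y ^ (Suc k * N)) sums PS (Bco c lam N) Y"
  proof -
    have "(\<lambda>k. (\<lambda>n. Bco c lam N n * Y ^ n) (Suc k * N)) sums PS (Bco c lam N) Y \<longleftrightarrow> (\<lambda>n. Bco c lam N n * Y ^ n) sums PS (Bco c lam N) Y"
      by (rule sums_mono_reindex) (use Bco_reindex[OF N] in auto)
    thus ?thesis using PS_sums[OF allconv_B[OF N]] by simp
  qed
  have sT: "Tm sums Phi c (Bco c lam N) 2 x t"
  proof -
    have "(\<lambda>k. Bco c lam N (Suc k * N) * Y ^ (Suc k * N) / Y\<^sup>2) sums (PS (Bco c lam N) Y / Y\<^sup>2)"
      by (rule sums_divide[OF sB])
    moreover have "Tm = (\<lambda>k. Bco c lam N (Suc k * N) * Y ^ (Suc k * N) / Y\<^sup>2)" using TB by (rule ext)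
    ultimately show ?thesis unfolding Phi_def Y_def[symmetric] by simp
  qed
  define C where "C = pi powr (real d / 2) * (c * t) ^ (d - 2) * MLd d ((lam * t / 2) ^ (d - 1))"
  have Cpos: "C > 0"
  proof -
    have "ML2 (real d - 1) (real d - 1) ((lam * t) ^ (d - 1)) > 0" by (rule ML2_pos[OF N d]) (use lam t in simp)
    hence "MLd d ((lam * t / 2) ^ (d - 1)) > 0" unfolding MLd_eq[OF N d] by simp
    thus ?thesis unfolding C_def using c t by simp
  qed
  have pT: "pcond d c x t (Suc k) * probN d lam t (Suc k) = Tm k / C" for k
    using term_eq[OF N d c lam t, of k x] Cpos unfolding Tm_def C_def[symmetric] by simp
  have "(\<lambda>k. Tm k / C) sums (Phi c (Bco c lam N) 2 x t / C)" by (rule sums_divide[OF sT])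
  hence "(\<lambda>k. pcond d c x t (Suc k) * probN d lam t (Suc k)) sums (Phi c (Bco c lam N) 2 x t / C)"
    unfolding pT .
  hence "pX d c lam x t = Phi c (Bco c lam N) 2 x t / C" unfolding pX_def by (rule sums_unique[symmetric])
  hence FP: "F = Phi c (Bco c lam N) 2 x t" unfolding F_def C_def[symmetric] using Cpos by simp
  show "F = Phi c (Bco c lam N) 2 x t" by (rule FP)
  show "(\<lambda>k. (lam / (2 * c)) ^ (Suc k * (d - 1))
                  * (c\<^sup>2 * t\<^sup>2 - (norm x)\<^sup>2) powr (real (Suc k) / 2 * (real d - 1) - 1)
                  / (Gamma (real (Suc k) / 2 * (real d - 1)) * Gamma ((real d - 1) / 2 * (real (Suc k) + 1))))
            sums F" using sT unfolding FP Tm_def .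
qed

lemma PS_shift:
  assumes b: "allconv b"
  shows "PS (\<lambda>k. if K \<le> k then a * b (k - K) else 0) y = a * y ^ K * PS b y"
proof -
  define f where "f = (\<lambda>k. (if K \<le> k then a * b (k - K) else 0) * y ^ k)"
  have "(\<lambda>i. a * y ^ K * (b i * y ^ i)) sums (a * y ^ K * PS b y)"
    by (intro sums_mult PS_sums b)
  moreover have "(\<lambda>i. f (i + K)) = (\<lambda>i. a * y ^ K * (b i * y ^ i))"
    by (rule ext) (simp add: f_def power_add algebra_simps)
  ultimately have "(\<lambda>i. f (i + K)) sums (a * y ^ K * PS b y)" by simp
  hence "f sums (a * y ^ K * PS b y + (\<Sum>i<K. f i))" by (simp only: sums_iff_shift)
  moreover have "(\<Sum>i<K. f i) = 0" by (intro sum.neutral) (simp add: f_def)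
  ultimately have "f sums (a * y ^ K * PS b y)" by simp
  thus ?thesis unfolding PS_def f_def by (rule sums_unique[symmetric])
qed

lemma agree_KGpow:
  assumes c: "c > 0" and a: "agree c u v"
  shows "agree c ((KG c ^^ n) u) ((KG c ^^ n) v)"
proof (induction n)
  case 0 then show ?case using a by simp
next
  case (Suc n) then show ?case using agree_KG[OF c] by simp
qed

theorem theorem3p1:
  fixes c lam :: real
  assumes d2: "CARD('n::finite) \<ge> 2"
    and c: "c > 0" and lam: "lam > 0"
  defines "d \<equiv> CARD('n)"
  defines "f \<equiv> (\<lambda>(x::real^'n) t. pi powr (real d / 2) * (c * t) ^ (d - 2)
                   * MLd d ((lam * t / 2) ^ (d - 1)) * pX d c lam x t)"
  shows "(\<forall>x t. t > 0 \<and> norm x < c * t \<longrightarrow>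
            (\<lambda>k. (lam / (2 * c)) ^ (Suc k * (d - 1))
                  * (c\<^sup>2 * t\<^sup>2 - (norm x)\<^sup>2) powr (real (Suc k) / 2 * (real d - 1) - 1)
                  / (Gamma (real (Suc k) / 2 * (real d - 1)) * Gamma ((real d - 1) / 2 * (real (Suc k) + 1))))
            sums f x t)
       \<and> (\<forall>ds :: 'n option list. \<forall>dir x t. t > 0 \<and> norm x < c * t \<longrightarrow>
            pdiff dir (foldr pd ds f) x t)
       \<and> (\<forall>x t. t > 0 \<and> norm x < c * t \<longrightarrow>
            ((KG c) ^^ (d - 1)) f x t = lam ^ (2 * (d - 1)) * f x t)"
proof -
  define N where "N = d - 1"
  have N: "N \<ge> 1" and dN: "d = Suc N" using d2 unfolding N_def d_def by auto
  define B where "B = Bco c lam N"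
  have B: "allconv B" unfolding B_def by (rule allconv_B[OF N])
  have fP: "f x t = Phi c B 2 x t" if r: "reg c x t" for x :: "real ^ 'n" and t
    unfolding f_def B_def using part1(2)[OF N dN c lam r] by simp
  have A: "agree c f (Phi c B 2)" unfolding agree_def using fP by blast
  have P1: "\<forall>x t. t > 0 \<and> norm x < c * t \<longrightarrow>
            (\<lambda>k. (lam / (2 * c)) ^ (Suc k * (d - 1))
                  * (c\<^sup>2 * t\<^sup>2 - (norm x)\<^sup>2) powr (real (Suc k) / 2 * (real d - 1) - 1)
                  / (Gamma (real (Suc k) / 2 * (real d - 1)) * Gamma ((real d - 1) / 2 * (real (Suc k) + 1))))
            sums f x t"
  proof (intro allI impI)
    fix x :: "real ^ 'n" and t assume "t > 0 \<and> norm x < c * t"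
    hence r: "reg c x t" by (simp add: reg_def)
    show "(\<lambda>k. (lam / (2 * c)) ^ (Suc k * (d - 1))
                  * (c\<^sup>2 * t\<^sup>2 - (norm x)\<^sup>2) powr (real (Suc k) / 2 * (real d - 1) - 1)
                  / (Gamma (real (Suc k) / 2 * (real d - 1)) * Gamma ((real d - 1) / 2 * (real (Suc k) + 1))))
            sums f x t"
      unfolding f_def using part1(1)[OF N dN c lam r] by simp
  qed
  have P2: "\<forall>ds :: 'n option list. \<forall>dir x t. t > 0 \<and> norm x < c * t \<longrightarrow>
            pdiff dir (foldr pd ds f) x t"
  proof (intro allI impI)
    fix ds :: "'n option list" and dir and x :: "real ^ 'n" and t assume "t > 0 \<and> norm x < c * t"
    hence r: "reg c x t" by (simp add: reg_def)
    show "pdiff dir (foldr pd ds f) x t"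
      by (rule Scl_all_pdiff[OF c Scl.base[OF B] A r])
  qed
  have P3: "\<forall>x t. t > 0 \<and> norm x < c * t \<longrightarrow>
            ((KG c) ^^ (d - 1)) f x t = lam ^ (2 * (d - 1)) * f x t"
  proof (intro allI impI)
    fix x :: "real ^ 'n" and t assume "t > 0 \<and> norm x < c * t"
    hence r: "reg c x t" by (simp add: reg_def)
    have "((KG c) ^^ (d - 1)) f x t = ((KG c) ^^ N) (Phi c B 2) x t"
      using agree_KGpow[OF c A, of N] r unfolding agree_def N_def by blast
    also have "\<dots> = Phi c (Eit c CARD('n) 2 B N) (2 + 2 * N) x t"
      using KG_iter[OF c B, of N 2] r unfolding agree_def by blast
    also have "Eit c CARD('n) 2 B N = (\<lambda>k. if 2 * N \<le> k then lam ^ (2 * N) * B (k - 2 * N) else 0)"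
      using coef_main[OF N c, of lam] dN unfolding B_def d_def by auto
    also have "Phi c (\<lambda>k. if 2 * N \<le> k then lam ^ (2 * N) * B (k - 2 * N) else 0) (2 + 2 * N) x t
        = lam ^ (2 * N) * Phi c B 2 x t"
    proof -
      have Y: "Yf c x t > 0" by (rule reg_Y[OF c r])
      show ?thesis unfolding Phi_def PS_shift[OF B] using Y by (simp add: power_add field_simps power2_eq_square)
    qed
    also have "\<dots> = lam ^ (2 * (d - 1)) * f x t" using fP[OF r] unfolding N_def by simp
    finally show "((KG c) ^^ (d - 1)) f x t = lam ^ (2 * (d - 1)) * f x t" .
  qed
  show ?thesis using P1 P2 P3 by blast
qed


end
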